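(* Let $d\in\mathbb{N}^*$ and $M\in\mathbb{N}^*$. There exists a feed-forward neural network architecture $\mathcal{A}$ with $d$ input neurons, two hidden layers, $2(d+1)^2M$ weights and the Heaviside activation function, such that for any $(\alpha_i)_{1\le i\le M}\in\mathbb{R}^M$ and any collection $(\mathcal{C}_i)_{1\le i\le M}$ of mutually disjoint hypercubes of $\mathbb{R}^d$, the function $\tilde f:\mathbb{R}^d\to\mathbb{R}$ defined by $\tilde f(x)=\sum_{i=1}^M\alpha_i\mathds{1}_{\mathcal{C}_i}(x)$ belongs to $H_{\mathcal{A}}$.
   Context: A hypercube here is a cube in $\mathbb{R}^d$ with nonempty interior, bounded by $2d$ faces supported by hyperplanes, where each face may or may not belong to the cube (i.e. it is an intersection of $2d$ half-spaces $\{\langle \mathbf w_j,x\rangle+b_j\ge0\}$ or $\{\langle \mathbf w_j,x\rangle+b_j>0\}$ forming a cube). Heaviside activation: $\sigma(x)=\mathds{1}_{x\ge0}$. A feed-forward architecture is a directed acyclic graph with $d$ input nodes (in-degree $0$), a single output node (out-degree $0$); layer $0$ is the inputs, layer $\ell$ consists of nodes having a predecessor in layer $\ell-1$ and other predecessors only in earlier layers; intermediate layers are hidden layers. A real weight is attached to every edge and every non-input node; the number of weights is their total number. For weights $\mathbf w$, input neuron $v$ outputs $x_v$, each hidden neuron outputs $\sigma(\sum_{u\in P_v}w_{u\to v}y_u+w_v)$ ($P_v$ = predecessors), the output neuron outputs $\sum_{u\in P_v}w_{u\to v}y_u+w_v$; $H_{\mathcal{A}}$ is the set of all functions $\mathbb{R}^d\to\mathbb{R}$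 so computed over all weight vectors. *)

theory Defs
  imports "HOL-Analysis.Analysis"
begin

definition heaviside :: "real \<Rightarrow> real" where
  "heaviside t = (if t \<ge> 0 then 1 else 0)"

text \<open>Hypercubes of R^d (d = CARD('n)): a (possibly rotated) cube with centre c,
  orthonormal face normals u j, half side length r > 0; each of the 2d faces is
  either included (closed half-space) or excluded (open half-space).\<close>
definition hypercube :: "(real^'n) set \<Rightarrow> bool" where
  "hypercube C \<longleftrightarrow>
     (\<exists>(c::real^'n) (u::'n \<Rightarrow> real^'n) (r::real) (lo::'n \<Rightarrow> bool) (hi::'n \<Rightarrow> bool).
        r > 0 \<and> (\<forall>i j. u i \<bullet> u j = (if i = j then 1 else 0)) \<and>
        C = {x. \<forall>j. (if lo j then - r \<le> (x - c) \<bullet> u j else - r < (x - c) \<bullet> u j) \<and>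
                     (if hi j then (x - c) \<bullet> u j \<le> r else (x - c) \<bullet> u j < r)})"

text \<open>Architectures: nodes are of type 'n + nat; the input neurons are exactly the
  nodes Inl i (input Inl i reads coordinate i), which are exactly the nodes of in-degree 0.\<close>
type_synonym 'n node = "'n + nat"
type_synonym 'n arch = "'n node set \<times> ('n node \<times> 'n node) set"

definition valid_arch :: "'n arch \<Rightarrow> bool" where
  "valid_arch A \<longleftrightarrow> (case A of (V, E) \<Rightarrow>
      finite V \<and> E \<subseteq> V \<times> V \<and> range Inl \<subseteq> V \<and>
      (\<forall>v\<in>V. (\<not> (\<exists>u. (u, v) \<in> E)) \<longleftrightarrow> v \<in> range Inl) \<and>
      acyclic E \<and>
      (\<exists>!ov. ov \<in> V \<and> (\<forall>w. (ov, w) \<notin> E)))"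

definition out_node :: "'n arch \<Rightarrow> 'n node" where
  "out_node A = (THE ov. ov \<in> fst A \<and> (\<forall>w. (ov, w) \<notin> snd A))"

definition layer :: "'n arch \<Rightarrow> 'n node \<Rightarrow> nat" where
  "layer A v = Max {n. \<exists>u. (u, v) \<in> snd A ^^ n}"

definition num_hidden_layers :: "'n arch \<Rightarrow> nat" where
  "num_hidden_layers A = card (layer A ` fst A - {0, layer A (out_node A)})"

text \<open>One weight per edge and one (bias) per non-input node.\<close>
definition num_weights :: "'n arch \<Rightarrow> nat" where
  "num_weights A = card (snd A) + card (fst A - range Inl)"

definition preds :: "'n arch \<Rightarrow> 'n node \<Rightarrow> 'n node set" where
  "preds A v = {u \<in> fst A. (u, v) \<in> snd A}"

text \<open>Neuron outputs, computed with a fuel parameter (card V suffices in a DAG).\<close>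
fun nval :: "nat \<Rightarrow> 'n arch \<Rightarrow> ('n node \<times> 'n node \<Rightarrow> real) \<Rightarrow> ('n node \<Rightarrow> real)
              \<Rightarrow> real^'n \<Rightarrow> 'n node \<Rightarrow> real" where
  "nval 0 A w b x v = (case v of Inl i \<Rightarrow> x $ i | Inr _ \<Rightarrow> 0)"
| "nval (Suc k) A w b x v = (case v of Inl i \<Rightarrow> x $ i
     | Inr _ \<Rightarrow> heaviside ((\<Sum>u\<in>preds A v. w (u, v) * nval k A w b x u) + b v))"

definition net_output :: "'n arch \<Rightarrow> ('n node \<times> 'n node \<Rightarrow> real) \<Rightarrow> ('n node \<Rightarrow> real)
                          \<Rightarrow> real^'n \<Rightarrow> real" where
  "net_output A w b x =
     (let ov = out_node A in
       (\<Sum>u\<in>preds A ov. w (u, ov) * nval (card (fst A)) A w b x u) + b ov)"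

definition hclass :: "'n arch \<Rightarrow> (real^'n \<Rightarrow> real) set" where
  "hclass A = {f. \<exists>w b. \<forall>x. f x = net_output A w b x}"

end

theory Submission
  imports Defs "HOL-Analysis.Analysis"
begin

lemma mod_div_blk:
  fixes d i k :: nat
  assumes "k < 2*d"
  shows "(2*d*i + k) mod (2*d) = k" "(2*d*i + k) div (2*d) = i"
  using assms by auto

lemma blk_lt:
  fixes d i k M :: nat
  assumes "k < 2*d" "i < M"
  shows "2*d*i + k < 2*d*M"
proof -
  have "2*d*i + k < 2*d*i + 2*d" using assms by simp
  also have "\<dots> = 2*d*(i+1)" by (simp add: algebra_simps)
  also have "\<dots> \<le> 2*d*M" using assms by (intro mult_le_mono2) simp
  finally show ?thesis .
qed

lemma div_lt_M:
  fixes d n M :: nat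
  assumes "n < 2*d*M"
  shows "n div (2*d) < M"
  using assms by (cases "d = 0") (auto simp: less_mult_imp_div_less mult.commute)

definition E1 :: "nat \<Rightarrow> nat \<Rightarrow> ('n node \<times> 'n node) set" where
  "E1 d M = (\<lambda>(j,n). (Inl j, Inr n)) ` (UNIV \<times> {..<2*d*M})"
definition E2 :: "nat \<Rightarrow> nat \<Rightarrow> ('n node \<times> 'n node) set" where
  "E2 d M = (\<lambda>(i,k). (Inr (2*d*i+k), Inr (2*d*i))) ` ({..<M} \<times> {1..<2*d})"
definition E3 :: "nat \<Rightarrow> nat \<Rightarrow> ('n node \<times> 'n node) set" where
  "E3 d M = (\<lambda>i. (Inr (2*d*i), Inr (2*d*M))) ` {..<M}"
definition E4 :: "nat \<Rightarrow> nat \<Rightarrow> ('n node \<times> 'n node) set" where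
  "E4 d M = (\<lambda>i. (Inr (2*d*i+1), Inr (2*d*M))) ` {..<M}"
definition E5 :: "nat \<Rightarrow> nat \<Rightarrow> ('n node \<times> 'n node) set" where
  "E5 d M = (\<lambda>i. (Inr (2*d*i+1), Inr 0)) ` {1..<M}"

definition EE :: "nat \<Rightarrow> nat \<Rightarrow> ('n node \<times> 'n node) set" where
  "EE d M = E1 d M \<union> E2 d M \<union> E3 d M \<union> E4 d M \<union> E5 d M"
definition VV :: "nat \<Rightarrow> nat \<Rightarrow> 'n node set" where
  "VV d M = range Inl \<union> Inr ` {..2*d*M}"

definition rk :: "nat \<Rightarrow> nat \<Rightarrow> 'n node \<Rightarrow> nat" where
  "rk d M v = (case v of Inl _ \<Rightarrow> 0 | Inr n \<Rightarrow>
     (if 2*d*M \<le> n then 3 else if n mod (2*d) = 0 then 2 else 1))"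

lemma EE_cases:
  assumes "(a,b) \<in> EE d M"
  obtains (e1) j n where "a = Inl j" "b = Inr n" "n < 2*d*M"
  | (e2) i k where "a = Inr (2*d*i+k)" "b = Inr (2*d*i)" "i < M" "1 \<le> k" "k < 2*d"
  | (e3) i where "a = Inr (2*d*i)" "b = Inr (2*d*M)" "i < M"
  | (e4) i where "a = Inr (2*d*i+1)" "b = Inr (2*d*M)" "i < M"
  | (e5) i where "a = Inr (2*d*i+1)" "b = Inr 0" "1 \<le> i" "i < M"
proof -
  from assms consider "(a,b) \<in> E1 d M" | "(a,b) \<in> E2 d M" | "(a,b) \<in> E3 d M"
    | "(a,b) \<in> E4 d M" | "(a,b) \<in> E5 d M" unfolding EE_def by blast
  then show thesis
  proof cases
    case 1 then show ?thesis unfolding E1_def using e1 by fastforce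
  next
    case 2 then show ?thesis unfolding E2_def using e2 by fastforce
  next
    case 3 then show ?thesis unfolding E3_def using e3 by fastforce
  next
    case 4 then show ?thesis unfolding E4_def using e4 by fastforce
  next
    case 5 then show ?thesis unfolding E5_def using e5 by fastforce
  qed
qed

context
  fixes d M :: nat
  assumes d1: "d \<ge> 1" and M1: "M \<ge> 1"
begin

lemma EE_rk: "(a,b) \<in> EE d M \<Longrightarrow> rk d M a < rk d M b"
proof (erule EE_cases)
  fix j n assume "a = Inl j" "b = Inr n" "n < 2*d*M"
  then show ?thesis by (simp add: rk_def)
next
  fix i k assume h: "a = Inr (2*d*i+k)" "b = Inr (2*d*i)" "i < M" "1 \<le> k" "k < 2*d"
  have "2*d*i + k < 2*d*M" using blk_lt h by blast
  moreover have "2*d*i < 2*d*M" using blk_lt[of 0 d i M] h d1 by simp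
  ultimately show ?thesis using h mod_div_blk[of k d i] by (simp add: rk_def)
next
  fix i assume h: "a = Inr (2*d*i)" "b = Inr (2*d*M)" "i < M"
  have "2*d*i < 2*d*M" using blk_lt[of 0 d i M] h d1 by simp
  then show ?thesis using h by (simp add: rk_def)
next
  fix i assume h: "a = Inr (2*d*i+1)" "b = Inr (2*d*M)" "i < M"
  have "2*d*i+1 < 2*d*M" using blk_lt[of 1 d i M] h d1 by simp
  then show ?thesis using h by (simp add: rk_def)
next
  fix i assume h: "a = Inr (2*d*i+1)" "b = Inr 0" "1 \<le> i" "i < M"
  have "2*d*i+1 < 2*d*M" using blk_lt[of 1 d i M] h d1 by simp
  moreover have "(2*d*i+1) mod (2*d) = 1" using mod_div_blk[of 1 d i] d1 by simp
  moreover have "0 < 2*d*M" using d1 M1 by simp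
  ultimately show ?thesis using h d1 by (simp add: rk_def)
qed

lemma EE_wf: "wf (EE d M)"
proof -
  have "EE d M \<subseteq> inv_image less_than (rk d M)" using EE_rk by auto
  then show ?thesis using wf_subset[OF wf_inv_image[OF wf_less_than]] by blast
qed

lemma relpow_rk: "(u,v) \<in> EE d M ^^ n \<Longrightarrow> rk d M u + n \<le> rk d M v"
proof (induction n arbitrary: v)
  case 0 then show ?case by simp
next
  case (Suc n)
  then obtain w where "(u,w) \<in> EE d M ^^ n" "(w,v) \<in> EE d M" by auto
  with Suc.IH[of w] EE_rk[of w v] show ?case by simp
qed

lemma rk_le3: "rk d M v \<le> 3" by (simp add: rk_def split: sum.split)

lemma e1_mem: "n < 2*d*M \<Longrightarrow> (Inl j, Inr n) \<in> EE d M"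
  unfolding EE_def E1_def by auto

lemma e2_mem: assumes "n < 2*d*M" "n mod (2*d) = 0" "1 \<le> k" "k < 2*d"
  shows "(Inr (n+k), Inr n) \<in> EE d M"
proof -
  have n: "n = 2*d*(n div (2*d))" using assms(2) by (metis add_0_right div_mult_mod_eq mult.commute)
  have "n div (2*d) < M" using div_lt_M assms(1) by blast
  then have "(Inr (2*d*(n div (2*d))+k), Inr (2*d*(n div (2*d)))) \<in> E2 d M"
    unfolding E2_def using assms by (intro image_eqI[where x="(n div (2*d), k)"]) auto
  then show ?thesis using n unfolding EE_def by (metis UnI1 UnI2)
qed

lemma e2_mem': assumes "n < 2*d*M" "n mod (2*d) \<noteq> 0"
  shows "(Inr n, Inr (2*d*(n div (2*d)))) \<in> EE d M"
proof -
  have "n div (2*d) < M" using div_lt_M assms(1) by blast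
  moreover have "n = 2*d*(n div (2*d)) + n mod (2*d)" by simp
  moreover have "n mod (2*d) < 2*d" using d1 by simp
  ultimately have "(Inr (2*d*(n div (2*d)) + n mod (2*d)), Inr (2*d*(n div (2*d)))) \<in> E2 d M"
    unfolding E2_def using assms by (intro image_eqI[where x="(n div (2*d), n mod (2*d))"]) auto
  then show ?thesis unfolding EE_def using \<open>n = _\<close> by (metis UnI1 UnI2)
qed

lemma e3_mem: assumes "n < 2*d*M" "n mod (2*d) = 0"
  shows "(Inr n, Inr (2*d*M)) \<in> EE d M"
proof -
  have n: "n = 2*d*(n div (2*d))" using assms(2) by (metis add_0_right div_mult_mod_eq mult.commute)
  have "n div (2*d) < M" using div_lt_M assms(1) by blast
  then have "(Inr (2*d*(n div (2*d))), Inr (2*d*M)) \<in> E3 d M"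
    unfolding E3_def by auto
  then show ?thesis using n unfolding EE_def by (metis UnI1 UnI2)
qed

lemma EE_src: "(Inr n, y) \<in> EE d M \<Longrightarrow> n < 2*d*M"
proof (erule EE_cases)
  fix i k assume h: "Inr n = Inr (2*d*i+k)" "i < M" "1 \<le> k" "k < 2*d"
  then show ?thesis using blk_lt[of k d i M] by simp
next
  fix i assume h: "Inr n = Inr (2*d*i)" "i < M"
  then show ?thesis using blk_lt[of 0 d i M] d1 by simp
next
  fix i assume h: "Inr n = Inr (2*d*i+1)" "i < M"
  then show ?thesis using blk_lt[of 1 d i M] d1 by simp
next
  fix i assume h: "Inr n = Inr (2*d*i+1)" "i < M"
  then show ?thesis using blk_lt[of 1 d i M] d1 by simp
qed auto

lemma EE_tgt_Inl: "(a, Inl j) \<notin> EE d M"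
  by (auto elim: EE_cases)

lemma EE_sub: "EE d M \<subseteq> VV d M \<times> VV d M"
proof
  fix p assume "p \<in> EE d M"
  then obtain a b where p: "p = (a,b)" "(a,b) \<in> EE d M" by (cases p) auto
  have "a \<in> VV d M"
  proof (cases a)
    case (Inr n)
    then have "n < 2*d*M" using EE_src p by blast
    then show ?thesis using Inr by (auto simp: VV_def)
  qed (auto simp: VV_def)
  moreover have "b \<in> VV d M"
    using p(2) by (cases rule: EE_cases) (auto simp: VV_def)
  ultimately show "p \<in> VV d M \<times> VV d M" using p by simp
qed

end


context
  fixes d M :: nat
  assumes d1: "d \<ge> 1" and M1: "M \<ge> 1"
begin

lemma pos: "0 < 2*d*M" using d1 M1 by simp

lemma one_lt: "1 < 2*d*M"
proof -
  have "1 \<le> d*M" using d1 M1 by (simp add: Suc_le_eq)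
  then show ?thesis by linarith
qed

lemma no_out: "(Inr (2*d*M), w) \<notin> EE d M"
  using EE_src[OF d1 M1] by blast

lemma has_out: assumes "v \<in> VV d M" "v \<noteq> Inr (2*d*M)" shows "\<exists>w. (v,w) \<in> EE d M"
proof (cases v)
  case (Inl j) then show ?thesis using e1_mem[OF d1 M1 pos, of j] by blast
next
  case (Inr n)
  then have n: "n < 2*d*M" using assms by (auto simp: VV_def)
  show ?thesis
  proof (cases "n mod (2*d) = 0")
    case True show ?thesis unfolding Inr by (rule exI, rule e3_mem[OF d1 M1 n True])
  next
    case False show ?thesis unfolding Inr by (rule exI, rule e2_mem'[OF d1 M1 n False])
  qed
qed

lemma valid: "valid_arch (VV d M :: ('n::finite) node set, EE d M)"
  unfolding valid_arch_def split
proof (intro conjI)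
  show "finite (VV d M :: 'n node set)" by (simp add: VV_def)
  show "EE d M \<subseteq> VV d M \<times> VV d M" by (rule EE_sub[OF d1 M1])
  show "range Inl \<subseteq> (VV d M :: 'n node set)" by (simp add: VV_def)
  show "acyclic (EE d M :: ('n node \<times> 'n node) set)" by (rule wf_acyclic[OF EE_wf[OF d1 M1]])
  show "\<forall>v\<in>(VV d M :: 'n node set). (\<nexists>u. (u, v) \<in> EE d M) = (v \<in> range Inl)"
  proof
    fix v :: "'n node" assume v: "v \<in> VV d M"
    show "(\<nexists>u. (u, v) \<in> EE d M) = (v \<in> range Inl)"
    proof (cases v)
      case (Inl j) then show ?thesis using EE_tgt_Inl[OF d1 M1, where j=j] by auto
    next
      case (Inr n)
      then have n: "n \<le> 2*d*M" using v by (auto simp: VV_def)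
      have "\<exists>u. (u, v) \<in> EE d M"
      proof (cases "n < 2*d*M")
        case True show ?thesis unfolding Inr by (rule exI, rule e1_mem[OF d1 M1 True])
      next
        case False then have "n = 2*d*M" using n by simp
        show ?thesis unfolding Inr \<open>n = 2*d*M\<close> by (intro exI, rule e3_mem[OF d1 M1 pos]) simp
      qed
      then show ?thesis using Inr by auto
    qed
  qed
  show "\<exists>!ov. ov \<in> (VV d M :: 'n node set) \<and> (\<forall>w. (ov, w) \<notin> EE d M)"
  proof (rule ex1I[where a="Inr (2*d*M)"])
    show "Inr (2*d*M) \<in> (VV d M :: 'n node set) \<and> (\<forall>w. (Inr (2*d*M), w) \<notin> (EE d M :: ('n node \<times> 'n node) set))"
      using no_out by (auto simp: VV_def)
    fix ov :: "'n node" assume "ov \<in> VV d M \<and> (\<forall>w. (ov, w) \<notin> EE d M)"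
    then show "ov = Inr (2*d*M)" using has_out by blast
  qed
qed

lemma outn: "out_node (VV d M :: ('n::finite) node set, EE d M) = Inr (2*d*M)"
  unfolding out_node_def fst_conv snd_conv
proof (rule the_equality)
  show "Inr (2*d*M) \<in> (VV d M :: 'n node set) \<and> (\<forall>w. (Inr (2*d*M), w) \<notin> (EE d M :: ('n node \<times> 'n node) set))"
    using no_out by (auto simp: VV_def)
  fix ov :: "'n node" assume "ov \<in> VV d M \<and> (\<forall>w. (ov, w) \<notin> EE d M)"
  then show "ov = Inr (2*d*M)" using has_out by blast
qed

lemma witness: fixes v :: "'n node" assumes "v \<in> VV d M" shows "\<exists>u. (u, v) \<in> EE d M ^^ rk d M v"
proof (cases v)
  case (Inl j) then show ?thesis by (auto simp: rk_def)
next
  case (Inr n)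
  then have n: "n \<le> 2*d*M" using assms by (auto simp: VV_def)
  have r01: "(Inr 1 :: 'n node, Inr 0) \<in> EE d M" using e2_mem[OF d1 M1 pos, of 1] d1 by simp
  have i1: "(Inl undefined :: 'n node, Inr 1) \<in> EE d M" using e1_mem[OF d1 M1 one_lt] .
  show ?thesis
  proof (cases "n < 2*d*M")
    case False
    then have "n = 2*d*M" using n by simp
    then have "rk d M v = 3" using Inr by (simp add: rk_def)
    moreover have r03: "(Inr 0 :: 'n node, Inr (2*d*M)) \<in> EE d M" using e3_mem[OF d1 M1 pos] by simp
    have "(Inl undefined :: 'n node, Inr (2*d*M)) \<in> EE d M ^^ Suc (Suc (Suc 0))"
      by (rule relpow_Suc_I[OF relpow_Suc_I[OF relpow_Suc_I[OF relpow_0_I i1] r01] r03])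
    ultimately show ?thesis using Inr \<open>n = _\<close> by (auto simp: numeral_3_eq_3)
  next
    case True
    show ?thesis
    proof (cases "n mod (2*d) = 0")
      case False
      then have "rk d M v = 1" using Inr True by (simp add: rk_def)
      have "(Inl undefined :: 'n node, Inr n) \<in> EE d M ^^ Suc 0"
        by (rule relpow_Suc_I[OF relpow_0_I e1_mem[OF d1 M1 True]])
      then show ?thesis using \<open>rk d M v = 1\<close> Inr by auto
    next
      case z: True
      then have "rk d M v = 2" using Inr True by (simp add: rk_def)
      have q: "n = 2*d*(n div (2*d))" using z by (metis add_0_right div_mult_mod_eq mult.commute)
      have "n div (2*d) < M" using div_lt_M True by blast
      then have "n + 1 < 2*d*M" using blk_lt[of 1 d "n div (2*d)" M] d1 q by simp
      then have a: "(Inl undefined :: 'n node, Inr (n+1)) \<in> EE d M" by (rule e1_mem[OF d1 M1])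
      have b: "(Inr (n+1) :: 'n node, Inr n) \<in> EE d M" using e2_mem[OF d1 M1 True z, of 1] d1 by simp
      have "(Inl undefined :: 'n node, Inr n) \<in> EE d M ^^ Suc (Suc 0)"
        by (rule relpow_Suc_I[OF relpow_Suc_I[OF relpow_0_I a] b])
      then show ?thesis using \<open>rk d M v = 2\<close> Inr by (auto simp: numeral_2_eq_2)
    qed
  qed
qed

lemma layer_eq: assumes "v \<in> VV d M"
  shows "layer (VV d M :: ('n::finite) node set, EE d M) v = rk d M v"
  unfolding layer_def snd_conv
proof (rule Max_eqI)
  have "{n. \<exists>u. (u, v) \<in> EE d M ^^ n} \<subseteq> {..rk d M v}"
    using relpow_rk[OF d1 M1] by fastforce
  then show "finite {n. \<exists>u. (u, v) \<in> (EE d M :: ('n node \<times> 'n node) set) ^^ n}"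
    using finite_subset by blast
  show "\<And>y. y \<in> {n. \<exists>u. (u, v) \<in> EE d M ^^ n} \<Longrightarrow> y \<le> rk d M v"
    using relpow_rk[OF d1 M1] by fastforce
  show "rk d M v \<in> {n. \<exists>u. (u, v) \<in> (EE d M :: ('n node \<times> 'n node) set) ^^ n}"
    using witness[OF assms] by blast
qed

lemma hidden: "num_hidden_layers (VV d M :: ('n::finite) node set, EE d M) = 2"
proof -
  let ?A = "(VV d M :: 'n node set, EE d M)"
  let ?V = "VV d M :: 'n node set"
  have "layer ?A ` fst ?A = layer ?A ` ?V" by simp
  also have "\<dots> = rk d M ` ?V" by (rule image_cong) (simp_all add: layer_eq)
  also have "\<dots> = {0,1,2,3}"
  proof
    show "rk d M ` ?V \<subseteq> {0,1,2,3}"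
    proof
      fix y assume "y \<in> rk d M ` ?V"
      then obtain v :: "'n node" where "y = rk d M v" by blast
      then have "y \<le> 3" using rk_le3[OF d1 M1] by simp
      then show "y \<in> {0,1,2,3}" by auto
    qed
    have "1 < 2*d*M" by (rule one_lt)
    moreover have "(1::nat) mod (2*d) = 1" using d1 by simp
    ultimately have "rk d M (Inr 1 :: 'n node) = 1" by (simp add: rk_def)
    moreover have "rk d M (Inr 0 :: 'n node) = 2" using pos by (simp add: rk_def)
    moreover have "rk d M (Inr (2*d*M) :: 'n node) = 3" by (simp add: rk_def)
    moreover have "rk d M (Inl undefined :: 'n node) = 0" by (simp add: rk_def)
    moreover have "(Inr 1 :: 'n node) \<in> ?V" unfolding VV_def
      apply (intro UnI2 imageI) using d1 M1 by simp
    moreover have "(Inr 0 :: 'n node) \<in> ?V" "(Inr (2*d*M) :: 'n node) \<in> ?V"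
      unfolding VV_def by (intro UnI2 imageI, simp)+
    moreover have "(Inl undefined :: 'n node) \<in> ?V" unfolding VV_def by simp
    ultimately have "0 \<in> rk d M ` ?V" "1 \<in> rk d M ` ?V" "2 \<in> rk d M ` ?V" "3 \<in> rk d M ` ?V"
      by (metis image_eqI)+
    then show "{0,1,2,3} \<subseteq> rk d M ` ?V" by blast
  qed
  finally have "layer ?A ` fst ?A = {0,1,2,3}" .
  moreover have "layer ?A (out_node ?A) = 3"
  proof -
    have "out_node ?A = Inr (2*d*M)" by (rule outn)
    moreover have "(Inr (2*d*M) :: 'n node) \<in> ?V" by (simp add: VV_def)
    ultimately show ?thesis using layer_eq[of "Inr (2*d*M) :: 'n node"] by (simp add: rk_def)
  qed
  ultimately show ?thesis unfolding num_hidden_layers_def by simp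
qed

end


context
  fixes d M :: nat
  assumes d1: "d \<ge> 1" and M1: "M \<ge> 1"
begin

lemma cE1: "card (E1 d M :: ('n::finite node \<times> 'n node) set) = CARD('n) * (2*d*M)"
  unfolding E1_def
  by (subst card_image) (auto simp: inj_on_def card_cartesian_product)

lemma cE2: "card (E2 d M :: ('n node \<times> 'n node) set) = M * (2*d - 1)"
  unfolding E2_def
proof (subst card_image)
  show "inj_on (\<lambda>(i, k). (Inr (2*d*i+k) :: 'n node, Inr (2*d*i) :: 'n node)) ({..<M} \<times> {1..<2*d})"
    using d1 by (auto simp: inj_on_def)
qed (simp add: card_cartesian_product)

lemma cE3: "card (E3 d M :: ('n node \<times> 'n node) set) = M"
  unfolding E3_def using d1 by (subst card_image) (auto simp: inj_on_def)

lemma cE4: "card (E4 d M :: ('n node \<times> 'n node) set) = M"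
  unfolding E4_def using d1 by (subst card_image) (auto simp: inj_on_def)

lemma cE5: "card (E5 d M :: ('n node \<times> 'n node) set) = M - 1"
  unfolding E5_def using d1 by (subst card_image) (auto simp: inj_on_def)

lemma par: "2*d*(i::nat) \<noteq> 2*d*i' + 1"
  by (metis even_add even_mult_iff even_numeral odd_one)

lemma cEE: "card (EE d M :: ('n::finite node \<times> 'n node) set) =
   CARD('n) * (2*d*M) + M * (2*d - 1) + M + M + (M - 1)"
proof -
  have f1: "finite (E1 d M :: ('n node \<times> 'n node) set)" unfolding E1_def by simp
  have f2: "finite (E2 d M :: ('n node \<times> 'n node) set)" unfolding E2_def by simp
  have f3: "finite (E3 d M :: ('n node \<times> 'n node) set)" unfolding E3_def by simp
  have f4: "finite (E4 d M :: ('n node \<times> 'n node) set)" unfolding E4_def by simp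
  have f5: "finite (E5 d M :: ('n node \<times> 'n node) set)" unfolding E5_def by simp
  have i12: "(E1 d M :: ('n node \<times> 'n node) set) \<inter> E2 d M = {}" unfolding E1_def E2_def by auto
  have i3: "(E1 d M \<union> E2 d M :: ('n node \<times> 'n node) set) \<inter> E3 d M = {}"
  proof -
    have "\<And>i. i < M \<Longrightarrow> 2*d*i < 2*d*M" using d1 by simp
    then show ?thesis unfolding E1_def E2_def E3_def by fastforce
  qed
  have i4: "(E1 d M \<union> E2 d M \<union> E3 d M :: ('n node \<times> 'n node) set) \<inter> E4 d M = {}"
  proof -
    have "\<And>i. i < M \<Longrightarrow> 2*d*i < 2*d*M" using d1 by simp
    moreover have "\<And>i i'. 2*d*(i::nat) \<noteq> Suc (2*d*i')" using par by simp
    moreover have "\<And>i i'. Suc (2*d*i') \<noteq> 2*d*(i::nat)" using par by (metis Suc_eq_plus1)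
    ultimately show ?thesis unfolding E1_def E2_def E3_def E4_def by auto
  qed
  have i5: "(E1 d M \<union> E2 d M \<union> E3 d M \<union> E4 d M :: ('n node \<times> 'n node) set) \<inter> E5 d M = {}"
  proof -
    have a: "\<And>i k. 1 \<le> i \<Longrightarrow> k < 2*d \<Longrightarrow> 2*d*i+1 \<noteq> k"
    proof -
      fix i k :: nat assume "1 \<le> i" "k < 2*d"
      then have "2*d \<le> 2*d*i" by simp
      then show "2*d*i+1 \<noteq> k" using \<open>k < 2*d\<close> by linarith
    qed
    have b: "2*d*M \<noteq> 0" using d1 M1 by simp
    show ?thesis unfolding E1_def E2_def E3_def E4_def E5_def using a b d1 by fastforce
  qed
  have "card (EE d M :: ('n node \<times> 'n node) set) =
        card (E1 d M :: ('n node \<times> 'n node) set) + card (E2 d M :: ('n node \<times> 'n node) set)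
        + card (E3 d M :: ('n node \<times> 'n node) set) + card (E4 d M :: ('n node \<times> 'n node) set)
        + card (E5 d M :: ('n node \<times> 'n node) set)"
    unfolding EE_def
    using f1 f2 f3 f4 f5 i12 i3 i4 i5
    by (simp add: card_Un_disjoint)
  then show ?thesis by (simp only: cE1 cE2 cE3 cE4 cE5)
qed

lemma weights: "num_weights (VV d M :: ('n::finite) node set, EE d M) = 2 * (CARD('n) + 1)^2 * M"
  if "d = CARD('n)"
proof -
  have "VV d M - range Inl = (Inr ` {..2*d*M} :: 'n node set)" unfolding VV_def by auto
  then have "card (VV d M - range Inl :: 'n node set) = 2*d*M + 1"
    by (simp add: card_image)
  then have "num_weights (VV d M :: 'n node set, EE d M) =
     CARD('n) * (2*d*M) + M * (2*d - 1) + M + M + (M - 1) + (2*d*M + 1)"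
    unfolding num_weights_def using cEE by simp
  also have "\<dots> = 2 * (CARD('n) + 1)^2 * M"
  proof -
    obtain d' where "d = Suc d'" using d1 by (cases d) auto
    moreover obtain M' where "M = Suc M'" using M1 by (cases M) auto
    ultimately show ?thesis using that by (simp add: power2_eq_square algebra_simps)
  qed
  finally show ?thesis .
qed

end


locale netc =
  fixes d M :: nat and \<iota> :: "'n::finite \<Rightarrow> nat" and cc :: "nat \<Rightarrow> real^'n"
    and uu :: "nat \<Rightarrow> 'n \<Rightarrow> real^'n" and rr :: "nat \<Rightarrow> real"
    and lo hi :: "nat \<Rightarrow> 'n \<Rightarrow> bool" and al :: "nat \<Rightarrow> real"
  assumes dC: "d = CARD('n)" and M1: "M \<ge> 1" and bij: "bij_betw \<iota> UNIV {..<d}"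
    and rpos: "\<And>i. i < M \<Longrightarrow> rr i > 0"
begin

lemma d1: "d \<ge> 1" using dC by (simp add: Suc_leI)

definition jf :: "nat \<Rightarrow> 'n" where "jf k = inv_into UNIV \<iota> (k div 2)"
definition tt :: "nat \<Rightarrow> 'n \<Rightarrow> real^'n \<Rightarrow> real" where "tt i j x = (x - cc i) \<bullet> uu i j"
definition locond where "locond i j x = (if lo i j then - rr i \<le> tt i j x else - rr i < tt i j x)"
definition hicond where "hicond i j x = (if hi i j then tt i j x \<le> rr i else tt i j x < rr i)"
definition cnd :: "nat \<Rightarrow> nat \<Rightarrow> real^'n \<Rightarrow> bool" where
  "cnd i k x = (if k mod 2 = 1 then locond i (jf k) x else hicond i (jf k) x)"
definition clo :: "nat \<Rightarrow> nat \<Rightarrow> bool" where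
  "clo i k = (if k mod 2 = 1 then lo i (jf k) else hi i (jf k))"
definition sg :: "nat \<Rightarrow> real" where "sg k = (if k mod 2 = 1 then 1 else -1)"
definition pp :: "nat \<Rightarrow> nat \<Rightarrow> real" where "pp i k = (if clo i k then 1 else -1)"
definition cst :: "nat \<Rightarrow> nat \<Rightarrow> real" where "cst i k = (if clo i k then 0 else 1)"
definition pre :: "nat \<Rightarrow> nat \<Rightarrow> real^'n \<Rightarrow> real" where
  "pre i k x = pp i k * (sg k * tt i (jf k) x + rr i)"
definition hv where "hv i k x = heaviside (pre i k x)"
definition sv where "sv i k x = pp i k * hv i k x + cst i k"

lemma sv_ind: "sv i k x = (if cnd i k x then 1 else 0)"
  unfolding sv_def hv_def pre_def pp_def cst_def cnd_def clo_def sg_def locond_def hicond_def heaviside_def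
  by auto

lemma jf_inv: "k < 2*d \<Longrightarrow> \<iota> (jf k) = k div 2"
  unfolding jf_def using bij by (intro bij_betw_inv_into_right) auto

lemma jf_eq: "b < 2 \<Longrightarrow> jf (2 * \<iota> j + b) = j"
proof -
  assume "b < 2"
  then have "(2 * \<iota> j + b) div 2 = \<iota> j" by simp
  then show ?thesis unfolding jf_def using bij bij_betw_imp_inj_on inv_into_f_f by fastforce
qed

lemma cube_iff: "(\<forall>j. locond i j x \<and> hicond i j x) \<longleftrightarrow> (\<forall>k<2*d. cnd i k x)"
proof
  assume h: "\<forall>j. locond i j x \<and> hicond i j x"
  show "\<forall>k<2*d. cnd i k x" using h unfolding cnd_def by auto
next
  assume h: "\<forall>k<2*d. cnd i k x"
  show "\<forall>j. locond i j x \<and> hicond i j x"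
  proof
    fix j
    have "\<iota> j < d" using bij by (auto simp: bij_betw_def)
    then have "2 * \<iota> j + 1 < 2*d" "2 * \<iota> j + 0 < 2*d" by auto
    then have "cnd i (2 * \<iota> j + 1) x" "cnd i (2 * \<iota> j + 0) x" using h by blast+
    then show "locond i j x \<and> hicond i j x" unfolding cnd_def using jf_eq[of 1 j] jf_eq[of 0 j] by simp
  qed
qed

definition KK :: "nat \<Rightarrow> real" where "KK i = 2 * rr i + 1"
definition KK' :: "nat \<Rightarrow> real" where "KK' i = 2 * real d * KK i"
definition Ve where "Ve i x = (\<Sum>k\<in>{2..<2*d}. 1 - sv i k x)"
definition GG where "GG i x = rr i - KK i * Ve i x + KK' i * (1 - sv i 1 x) - tt i (jf 0) x"
definition zv where "zv i x = heaviside (pp i 0 * GG i x)"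

lemma Ve_nonneg: "0 \<le> Ve i x" unfolding Ve_def by (intro sum_nonneg) (simp add: sv_ind)
lemma Ve_le: "Ve i x \<le> 2 * real d"
proof -
  have "Ve i x \<le> (\<Sum>k\<in>{2..<2*d}. 1)" unfolding Ve_def by (intro sum_mono) (simp add: sv_ind)
  also have "\<dots> \<le> 2 * real d" by simp
  finally show ?thesis .
qed
lemma Ve_zero: "(\<forall>k\<in>{2..<2*d}. cnd i k x) \<Longrightarrow> Ve i x = 0"
  unfolding Ve_def by (simp add: sv_ind)
lemma Ve_ge1: "k \<in> {2..<2*d} \<Longrightarrow> \<not> cnd i k x \<Longrightarrow> 1 \<le> Ve i x"
proof -
  assume k: "k \<in> {2..<2*d}" and n: "\<not> cnd i k x"
  have "1 - sv i k x \<le> Ve i x" unfolding Ve_def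
    by (rule member_le_sum[OF k]) (auto simp: sv_ind)
  then show ?thesis using n by (simp add: sv_ind)
qed

lemma key:
  assumes i: "i < M"
  shows "(if clo i 0 then zv i x else 1 - zv i x) - (1 - sv i 1 x) = (if \<forall>k<2*d. cnd i k x then 1 else 0)"
proof -
  have r: "rr i > 0" using rpos i by simp
  have j01: "jf 1 = jf 0" unfolding jf_def by simp
  let ?t = "tt i (jf 0) x"
  show ?thesis
  proof (cases "cnd i 1 x")
    case False
    then have s1: "sv i 1 x = 0" by (simp add: sv_ind)
    have "1 < 2*d" using d1 by simp
    then have nall: "\<not> (\<forall>k<2*d. cnd i k x)" using False by blast
    have "?t \<le> - rr i" using False j01 unfolding cnd_def locond_def by (auto split: if_splits)
    moreover have "KK i * Ve i x \<le> KK i * (2 * real d)"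
      using Ve_le r by (intro mult_left_mono) (auto simp: KK_def)
    ultimately have "GG i x > 0" unfolding GG_def s1 KK'_def KK_def using r
      by (simp add: algebra_simps)
    then show ?thesis using nall s1 unfolding zv_def heaviside_def pp_def by auto
  next
    case True
    then have s1: "sv i 1 x = 1" by (simp add: sv_ind)
    have tlo: "?t \<ge> - rr i" using True j01 unfolding cnd_def locond_def by (auto split: if_splits)
    show ?thesis
    proof (cases "\<forall>k\<in>{2..<2*d}. cnd i k x")
      case False
      then obtain k where k: "k \<in> {2..<2*d}" "\<not> cnd i k x" by blast
      then have "1 \<le> Ve i x" using Ve_ge1 by blast
      then have kv: "KK i \<le> KK i * Ve i x" using r by (simp add: KK_def)
      have "GG i x = rr i - KK i * Ve i x - ?t" unfolding GG_def s1 by simp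
      moreover have "KK i = 2 * rr i + 1" by (simp add: KK_def)
      ultimately have "GG i x < 0" using kv tlo r by linarith
      moreover have "\<not> (\<forall>k<2*d. cnd i k x)" using k by auto
      ultimately show ?thesis using s1 unfolding zv_def heaviside_def pp_def by auto
    next
      case True2: True
      then have "Ve i x = 0" by (rule Ve_zero)
      then have G: "GG i x = rr i - ?t" unfolding GG_def s1 by simp
      have "(\<forall>k<2*d. cnd i k x) \<longleftrightarrow> cnd i 0 x"
      proof
        assume "cnd i 0 x"
        show "\<forall>k<2*d. cnd i k x"
        proof (intro allI impI)
          fix k assume "k < 2*d"
          show "cnd i k x"
          proof (cases "k < 2")
            case True then have "k = 0 \<or> k = 1" by auto
            then show ?thesis using \<open>cnd i 0 x\<close> \<open>cnd i 1 x\<close> by auto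
          next
            case False then show ?thesis using True2 \<open>k < 2*d\<close> by auto
          qed
        qed
      next
        assume "\<forall>k<2*d. cnd i k x" then show "cnd i 0 x" using d1 by simp
      qed
      moreover have "cnd i 0 x = (if hi i (jf 0) then ?t \<le> rr i else ?t < rr i)"
        unfolding cnd_def hicond_def by simp
      ultimately show ?thesis using s1 G unfolding zv_def heaviside_def pp_def clo_def by auto
    qed
  qed
qed

end


context netc begin

definition zc :: "nat \<Rightarrow> nat \<Rightarrow> real" where
  "zc i k = (if k = 1 then - pp i 0 * KK' i * pp i 1 else pp i 0 * KK i * pp i k)"
definition bh where "bh i k = pp i k * (rr i - sg k * (cc i \<bullet> uu i (jf k)))"
definition bz where "bz i = pp i 0 * (rr i - KK i * (\<Sum>k\<in>{2..<2*d}. 1 - cst i k)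
    + KK' i * (1 - cst i 1) + cc i \<bullet> uu i (jf 0))"
definition oc where "oc i = cst i 0 - 1 + cst i 1"

definition WW :: "'n node \<times> 'n node \<Rightarrow> real" where
  "WW e = (case e of
     (Inl l, Inr n) \<Rightarrow> if n < 2*d*M then
        (if n mod (2*d) = 0 then - pp (n div (2*d)) 0 * (uu (n div (2*d)) (jf 0) $ l)
         else pp (n div (2*d)) (n mod (2*d)) * sg (n mod (2*d)) * (uu (n div (2*d)) (jf (n mod (2*d))) $ l))
        else 0
   | (Inr n, Inr m) \<Rightarrow> if m = 2*d*M then
        (if n mod (2*d) = 0 then al (n div (2*d)) * pp (n div (2*d)) 0 else al (n div (2*d)) * pp (n div (2*d)) 1)
        else if n div (2*d) = m div (2*d) then zc (m div (2*d)) (n mod (2*d)) else 0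
   | _ \<Rightarrow> 0)"

definition BB :: "'n node \<Rightarrow> real" where
  "BB v = (case v of Inl _ \<Rightarrow> 0 | Inr n \<Rightarrow>
     if n = 2*d*M then (\<Sum>i<M. al i * oc i)
     else if n mod (2*d) = 0 then bz (n div (2*d)) else bh (n div (2*d)) (n mod (2*d)))"

abbreviation "AA \<equiv> (VV d M :: 'n node set, EE d M)"

lemma nv_in: "nval f AA WW BB x (Inl l) = x $ l" by (cases f) auto

lemma preds_h: assumes "n < 2*d*M" "n mod (2*d) \<noteq> 0"
  shows "preds AA (Inr n) = range Inl"
proof
  show "preds AA (Inr n) \<subseteq> range Inl"
  proof
    fix u assume "u \<in> preds AA (Inr n)"
    then have "(u, Inr n) \<in> EE d M" by (simp add: preds_def)
    then show "u \<in> range Inl"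
    proof (cases rule: EE_cases)
      case (e2 i k) then show ?thesis using assms by simp
    next
      case (e3 i) then show ?thesis using assms by simp
    next
      case (e4 i) then show ?thesis using assms by simp
    next
      case (e5 i) then show ?thesis using assms by simp
    qed auto
  qed
  show "range Inl \<subseteq> preds AA (Inr n)"
    using e1_mem[OF d1 M1 assms(1)] by (auto simp: preds_def VV_def)
qed

lemma inner_sum: "(y::real^'n) \<bullet> z = (\<Sum>l\<in>UNIV. y $ l * z $ l)"
  by (simp add: inner_vec_def)

lemma nv_h: assumes i: "i < M" and k: "1 \<le> k" "k < 2*d"
  shows "nval (Suc f) AA WW BB x (Inr (2*d*i+k)) = hv i k x"
proof -
  let ?n = "2*d*i+k"
  have n: "?n < 2*d*M" using blk_lt[of k d i M] i k by simp
  have nm: "?n mod (2*d) = k" "?n div (2*d) = i" using k by auto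
  have "nval (Suc f) AA WW BB x (Inr ?n) =
      heaviside ((\<Sum>u\<in>range Inl. WW (u, Inr ?n) * nval f AA WW BB x u) + BB (Inr ?n))"
    using preds_h[OF n] nm k by simp
  also have "(\<Sum>u\<in>range Inl. WW (u, Inr ?n) * nval f AA WW BB x u)
      = (\<Sum>l\<in>UNIV. WW (Inl l, Inr ?n) * x $ l)"
    by (subst sum.reindex) (auto simp: nv_in)
  also have "\<dots> = (\<Sum>l\<in>UNIV. pp i k * sg k * (uu i (jf k) $ l * x $ l))"
    using n nm k by (intro sum.cong) (auto simp: WW_def)
  also have "\<dots> = pp i k * sg k * (x \<bullet> uu i (jf k))"
    by (simp add: inner_sum sum_distrib_left mult.commute)
  finally show ?thesis
    using n nm k unfolding hv_def pre_def tt_def BB_def bh_def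
    by (simp add: inner_diff_left algebra_simps)
qed


lemma finite_VV: "finite (VV d M :: 'n node set)" by (simp add: VV_def)

lemma nv_z: assumes i: "i < M"
  shows "nval (Suc (Suc f)) AA WW BB x (Inr (2*d*i)) = zv i x"
proof -
  let ?z = "Inr (2*d*i) :: 'n node"
  let ?S = "range Inl \<union> (\<lambda>k. Inr (2*d*i+k)) ` {1..<2*d} :: 'n node set"
  let ?g = "\<lambda>u. WW (u, ?z) * nval (Suc f) AA WW BB x u"
  have zl: "2*d*i < 2*d*M" using blk_lt[of 0 d i M] i d1 by simp
  have zm: "(2*d*i) mod (2*d) = 0" "(2*d*i) div (2*d) = i" using d1 by auto
  have fin: "finite (preds AA ?z)" using finite_VV by (simp add: preds_def)
  have sub: "?S \<subseteq> preds AA ?z"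
  proof
    fix u assume "u \<in> ?S"
    then consider l where "u = Inl l" | k where "k \<in> {1..<2*d}" "u = Inr (2*d*i+k)" by blast
    then show "u \<in> preds AA ?z"
    proof cases
      case 1 then show ?thesis using e1_mem[OF d1 M1 zl] by (auto simp: preds_def VV_def)
    next
      case 2
      then have "(u, ?z) \<in> EE d M" using e2_mem[OF d1 M1 zl zm(1), of k] by simp
      moreover have "2*d*i+k < 2*d*M" using blk_lt[of k d i M] i 2 by simp
      ultimately show ?thesis using 2 by (auto simp: preds_def VV_def)
    qed
  qed
  have zero: "\<forall>u\<in>preds AA ?z - ?S. ?g u = 0"
  proof
    fix u assume u: "u \<in> preds AA ?z - ?S"
    then have "(u, ?z) \<in> EE d M" by (simp add: preds_def)
    then show "?g u = 0"
    proof (cases rule: EE_cases)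
      case (e1 j n) then show ?thesis using u by auto
    next
      case (e2 i' k)
      then have "i' = i" using d1 by simp
      then show ?thesis using e2 u by auto
    next
      case (e3 i') then show ?thesis using zl by simp
    next
      case (e4 i') then show ?thesis using zl by simp
    next
      case (e5 i')
      have "(1::nat) < 2*d" using d1 by simp
      then have "(2*d*i'+1) div (2*d) = i'" "(2*d*i'+1) mod (2*d) = 1" by (rule mod_div_blk)+
      moreover have "0 \<noteq> 2*d*M" using d1 M1 by simp
      ultimately show ?thesis using e5 by (simp add: WW_def)
    qed
  qed
  have "(\<Sum>u\<in>preds AA ?z. ?g u) = (\<Sum>u\<in>?S. ?g u)"
    by (rule sum.mono_neutral_right[OF fin sub zero])
  also have "\<dots> = (\<Sum>u\<in>range Inl. ?g u) + (\<Sum>u\<in>(\<lambda>k. Inr (2*d*i+k)) ` {1..<2*d}. ?g u)"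
    by (rule sum.union_disjoint) auto
  also have "(\<Sum>u\<in>range Inl. ?g u) = (\<Sum>l\<in>UNIV. - pp i 0 * (uu i (jf 0) $ l * x $ l))"
    using zl zm by (subst sum.reindex) (auto simp: nv_in WW_def intro!: sum.cong)
  also have "\<dots> = - pp i 0 * (x \<bullet> uu i (jf 0))"
    by (simp add: inner_sum sum_distrib_left mult.commute)
  also have "(\<Sum>u\<in>(\<lambda>k. Inr (2*d*i+k)) ` {1..<2*d}. ?g u) = (\<Sum>k\<in>{1..<2*d}. zc i k * hv i k x)"
  proof (subst sum.reindex)
    show "inj_on (\<lambda>k. Inr (2*d*i+k) :: 'n node) {1..<2*d}" by (auto simp: inj_on_def)
    show "sum (?g \<circ> (\<lambda>k. Inr (2*d*i+k))) {1..<2*d} = (\<Sum>k\<in>{1..<2*d}. zc i k * hv i k x)"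
    proof (intro sum.cong refl)
      fix k assume k: "k \<in> {1..<2*d}"
      then have "(2*d*i+k) div (2*d) = i" "(2*d*i+k) mod (2*d) = k" by auto
      moreover have "2*d*i \<noteq> 2*d*M" using zl by simp
      ultimately show "(?g \<circ> (\<lambda>k. Inr (2*d*i+k))) k = zc i k * hv i k x"
        using nv_h[OF i, of k f x] k zm by (simp add: WW_def)
    qed
  qed
  also have "(\<Sum>k\<in>{1..<2*d}. zc i k * hv i k x) = zc i 1 * hv i 1 x + (\<Sum>k\<in>{2..<2*d}. zc i k * hv i k x)"
    using d1 by (subst sum.atLeast_Suc_lessThan) (auto simp: numeral_2_eq_2)
  also have "(\<Sum>k\<in>{2..<2*d}. zc i k * hv i k x) = pp i 0 * KK i * (\<Sum>k\<in>{2..<2*d}. pp i k * hv i k x)"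
    by (simp add: sum_distrib_left zc_def mult.assoc)
  finally have S: "(\<Sum>u\<in>preds AA ?z. ?g u) = - pp i 0 * (x \<bullet> uu i (jf 0)) +
     (zc i 1 * hv i 1 x + pp i 0 * KK i * (\<Sum>k\<in>{2..<2*d}. pp i k * hv i k x))" .
  have V: "Ve i x = (\<Sum>k\<in>{2..<2*d}. 1 - cst i k) - (\<Sum>k\<in>{2..<2*d}. pp i k * hv i k x)"
    unfolding Ve_def sv_def by (simp add: sum_subtractf[symmetric] algebra_simps)
  have "nval (Suc (Suc f)) AA WW BB x ?z = heaviside ((\<Sum>u\<in>preds AA ?z. ?g u) + BB ?z)"
    by simp
  also have "(\<Sum>u\<in>preds AA ?z. ?g u) + BB ?z = pp i 0 * GG i x"
    unfolding S using zl zm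
    by (simp add: BB_def bz_def GG_def V zc_def sv_def tt_def inner_diff_left algebra_simps)
  finally show ?thesis unfolding zv_def .
qed


lemma preds_out: "preds AA (Inr (2*d*M)) =
   (\<lambda>i. Inr (2*d*i)) ` {..<M} \<union> (\<lambda>i. Inr (2*d*i+1)) ` {..<M}"
proof
  show "preds AA (Inr (2*d*M)) \<subseteq> (\<lambda>i. Inr (2*d*i)) ` {..<M} \<union> (\<lambda>i. Inr (2*d*i+1)) ` {..<M}"
  proof
    fix u :: "'n node" assume "u \<in> preds AA (Inr (2*d*M))"
    then have "(u, Inr (2*d*M)) \<in> EE d M" by (simp add: preds_def)
    then show "u \<in> (\<lambda>i. Inr (2*d*i)) ` {..<M} \<union> (\<lambda>i. Inr (2*d*i+1)) ` {..<M}"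
    proof (cases rule: EE_cases)
      case (e2 i k)
      then have "2*d*i < 2*d*M" using d1 by simp
      then show ?thesis using e2 by simp
    next
      case (e5 i) then show ?thesis using d1 M1 by simp
    qed auto
  qed
  show "(\<lambda>i. Inr (2*d*i)) ` {..<M} \<union> (\<lambda>i. Inr (2*d*i+1)) ` {..<M} \<subseteq> preds AA (Inr (2*d*M))"
  proof
    fix u :: "'n node" assume "u \<in> (\<lambda>i. Inr (2*d*i)) ` {..<M} \<union> (\<lambda>i. Inr (2*d*i+1)) ` {..<M}"
    then obtain i where i: "i < M" and u: "u = Inr (2*d*i) \<or> u = Inr (2*d*i+1)" by blast
    have l0: "2*d*i < 2*d*M" using blk_lt[of 0 d i M] i d1 by simp
    have l1: "2*d*i+1 < 2*d*M" using blk_lt[of 1 d i M] i d1 by simp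
    have "(Inr (2*d*i) :: 'n node, Inr (2*d*M)) \<in> EE d M"
      using i unfolding EE_def E3_def by blast
    moreover have "(Inr (2*d*i+1) :: 'n node, Inr (2*d*M)) \<in> EE d M"
      using i unfolding EE_def E4_def by blast
    ultimately show "u \<in> preds AA (Inr (2*d*M))"
      using u l0 l1 by (auto simp: preds_def VV_def)
  qed
qed

lemma card_VV: "card (VV d M :: 'n node set) = CARD('n) + (2*d*M + 1)"
  unfolding VV_def by (subst card_Un_disjoint) (auto simp: card_image)

lemma net_eq: "net_output AA WW BB x =
   (\<Sum>i<M. al i * ((if clo i 0 then zv i x else 1 - zv i x) - (1 - sv i 1 x)))"
proof -
  have c1: "CARD('n) \<ge> 1" using d1 dC by simp
  define f where "f = CARD('n) + 2*d*M - 1"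
  have f: "card (VV d M :: 'n node set) = Suc (Suc f)" unfolding card_VV f_def using c1 by simp
  have o: "out_node AA = Inr (2*d*M)" by (rule outn[OF d1 M1])
  let ?g = "\<lambda>u. WW (u, Inr (2*d*M)) * nval (Suc (Suc f)) AA WW BB x u"
  have par': "\<And>i j. 2*d*i \<noteq> 2*d*j+1" by (metis even_add even_mult_iff even_numeral odd_one)
  have "(\<Sum>u\<in>preds AA (Inr (2*d*M)). ?g u) =
      (\<Sum>u\<in>(\<lambda>i. Inr (2*d*i)) ` {..<M}. ?g u) + (\<Sum>u\<in>(\<lambda>i. Inr (2*d*i+1)) ` {..<M}. ?g u)"
    unfolding preds_out using par' by (intro sum.union_disjoint) auto
  also have "(\<Sum>u\<in>(\<lambda>i. Inr (2*d*i)) ` {..<M}. ?g u) = (\<Sum>i<M. al i * pp i 0 * zv i x)"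
  proof (subst sum.reindex)
    show "inj_on (\<lambda>i. Inr (2*d*i) :: 'n node) {..<M}" using d1 by (auto simp: inj_on_def)
    show "sum (?g \<circ> (\<lambda>i. Inr (2*d*i))) {..<M} = (\<Sum>i<M. al i * pp i 0 * zv i x)"
    proof (intro sum.cong refl)
      fix i assume "i \<in> {..<M}"
      then show "(?g \<circ> (\<lambda>i. Inr (2*d*i))) i = al i * pp i 0 * zv i x"
        using nv_z[of i f x] d1 by (simp add: WW_def)
    qed
  qed
  also have "(\<Sum>u\<in>(\<lambda>i. Inr (2*d*i+1)) ` {..<M}. ?g u) = (\<Sum>i<M. al i * pp i 1 * hv i 1 x)"
  proof (subst sum.reindex)
    show "inj_on (\<lambda>i. Inr (2*d*i+1) :: 'n node) {..<M}" using d1 by (auto simp: inj_on_def)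
    show "sum (?g \<circ> (\<lambda>i. Inr (2*d*i+1))) {..<M} = (\<Sum>i<M. al i * pp i 1 * hv i 1 x)"
    proof (intro sum.cong refl)
      fix i assume i: "i \<in> {..<M}"
      have "(1::nat) < 2*d" using d1 by simp
      then have "(2*d*i+1) div (2*d) = i" "(2*d*i+1) mod (2*d) = 1" by (rule mod_div_blk)+
      moreover have "1 < 2*d" using d1 by simp
      ultimately show "(?g \<circ> (\<lambda>i. Inr (2*d*i+1))) i = al i * pp i 1 * hv i 1 x"
        using nv_h[of i 1 "Suc f" x] i by (simp add: WW_def)
    qed
  qed
  finally have S: "(\<Sum>u\<in>preds AA (Inr (2*d*M)). ?g u) =
     (\<Sum>i<M. al i * pp i 0 * zv i x) + (\<Sum>i<M. al i * pp i 1 * hv i 1 x)" .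
  have "net_output AA WW BB x = (\<Sum>u\<in>preds AA (Inr (2*d*M)). ?g u) + BB (Inr (2*d*M))"
    unfolding net_output_def Let_def o fst_conv f by (rule refl)
  also have "\<dots> = (\<Sum>i<M. al i * pp i 0 * zv i x) + (\<Sum>i<M. al i * pp i 1 * hv i 1 x) + (\<Sum>i<M. al i * oc i)"
    unfolding S by (simp add: BB_def)
  also have "\<dots> = (\<Sum>i<M. al i * ((if clo i 0 then zv i x else 1 - zv i x) - (1 - sv i 1 x)))"
    unfolding sum.distrib[symmetric]
    by (intro sum.cong refl) (simp add: oc_def sv_def pp_def cst_def algebra_simps)
  finally show ?thesis .
qed

lemma net_final: "net_output AA WW BB x = (\<Sum>i<M. al i * (if \<forall>k<2*d. cnd i k x then 1 else 0))"
  unfolding net_eq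
proof (intro sum.cong refl)
  fix i assume "i \<in> {..<M}"
  then show "al i * ((if clo i 0 then zv i x else 1 - zv i x) - (1 - sv i 1 x)) =
    al i * (if \<forall>k<2*d. cnd i k x then 1 else 0)" using key[of i x] by simp
qed

end


theorem proposition10:
  fixes M :: nat
  assumes "M \<ge> 1"
  shows "\<exists>A :: ('n::finite) arch.
           valid_arch A \<and> num_hidden_layers A = 2 \<and>
           num_weights A = 2 * (CARD('n) + 1)^2 * M \<and>
           (\<forall>(\<alpha>::nat \<Rightarrow> real) (C::nat \<Rightarrow> (real^'n) set).
              (\<forall>i\<in>{1..M}. hypercube (C i)) \<and>
              (\<forall>i\<in>{1..M}. \<forall>j\<in>{1..M}. i \<noteq> j \<longrightarrow> C i \<inter> C j = {}) \<longrightarrow>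
              (\<lambda>x. \<Sum>i=1..M. \<alpha> i * indicator (C i) x) \<in> hclass A)"
proof -
  define d where "d = CARD('n)"
  have d1: "d \<ge> 1" unfolding d_def by (simp add: Suc_leI)
  have M1: "M \<ge> 1" by (rule assms)
  let ?A = "(VV d M :: 'n node set, EE d M)"
  have main: "(\<lambda>x. \<Sum>i=1..M. \<alpha> i * indicator (C i) x) \<in> hclass ?A"
    if cubes: "\<forall>i\<in>{1..M}. hypercube (C i)" for \<alpha> :: "nat \<Rightarrow> real" and C :: "nat \<Rightarrow> (real^'n) set"
  proof -
    obtain \<iota> :: "'n \<Rightarrow> nat" where bij: "bij_betw \<iota> UNIV {..<d}"
      using ex_bij_betw_finite_nat[of "UNIV :: 'n set"] unfolding d_def
      by (auto simp: atLeast0LessThan)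
    have ex: "\<forall>i. \<exists>p :: (real^'n) \<times> ('n \<Rightarrow> real^'n) \<times> real \<times> ('n \<Rightarrow> bool) \<times> ('n \<Rightarrow> bool).
       i \<in> {1..M} \<longrightarrow> (fst (snd (snd p)) > 0 \<and> C i = {x. \<forall>j.
          (if fst (snd (snd (snd p))) j then - fst (snd (snd p)) \<le> (x - fst p) \<bullet> fst (snd p) j
           else - fst (snd (snd p)) < (x - fst p) \<bullet> fst (snd p) j) \<and>
          (if snd (snd (snd (snd p))) j then (x - fst p) \<bullet> fst (snd p) j \<le> fst (snd (snd p))
           else (x - fst p) \<bullet> fst (snd p) j < fst (snd (snd p)))})"
    proof
      fix i
      show "\<exists>p :: (real^'n) \<times> ('n \<Rightarrow> real^'n) \<times> real \<times> ('n \<Rightarrow> bool) \<times> ('n \<Rightarrow> bool).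
       i \<in> {1..M} \<longrightarrow> (fst (snd (snd p)) > 0 \<and> C i = {x. \<forall>j.
          (if fst (snd (snd (snd p))) j then - fst (snd (snd p)) \<le> (x - fst p) \<bullet> fst (snd p) j
           else - fst (snd (snd p)) < (x - fst p) \<bullet> fst (snd p) j) \<and>
          (if snd (snd (snd (snd p))) j then (x - fst p) \<bullet> fst (snd p) j \<le> fst (snd (snd p))
           else (x - fst p) \<bullet> fst (snd p) j < fst (snd (snd p)))})"
      proof (cases "i \<in> {1..M}")
        case True
        then have "hypercube (C i)" using cubes by blast
        then obtain c :: "real^'n" and u :: "'n \<Rightarrow> real^'n" and r :: real and lo hi :: "'n \<Rightarrow> bool" where h: "r > 0" "C i = {x. \<forall>j. (if lo j then - r \<le> (x - c) \<bullet> u j else - r < (x - c) \<bullet> u j) \<and>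
                     (if hi j then (x - c) \<bullet> u j \<le> r else (x - c) \<bullet> u j < r)}"
          unfolding hypercube_def by blast
        show ?thesis by (rule exI[of _ "(c,u,r,lo,hi)"]) (simp add: h)
      qed blast
    qed
    obtain P :: "nat \<Rightarrow> (real^'n) \<times> ('n \<Rightarrow> real^'n) \<times> real \<times> ('n \<Rightarrow> bool) \<times> ('n \<Rightarrow> bool)"
      where P: "\<forall>i. i \<in> {1..M} \<longrightarrow> (fst (snd (snd (P i))) > 0 \<and> C i = {x. \<forall>j.
          (if fst (snd (snd (snd (P i)))) j then - fst (snd (snd (P i))) \<le> (x - fst (P i)) \<bullet> fst (snd (P i)) j
           else - fst (snd (snd (P i))) < (x - fst (P i)) \<bullet> fst (snd (P i)) j) \<and>
          (if snd (snd (snd (snd (P i)))) j then (x - fst (P i)) \<bullet> fst (snd (P i)) j \<le> fst (snd (snd (P i)))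
           else (x - fst (P i)) \<bullet> fst (snd (P i)) j < fst (snd (snd (P i))))})"
      using choice[OF ex] by blast
    define cc where "cc i = fst (P (Suc i))" for i
    define uu where "uu i = fst (snd (P (Suc i)))" for i
    define rr where "rr i = fst (snd (snd (P (Suc i))))" for i
    define lo where "lo i = fst (snd (snd (snd (P (Suc i)))))" for i
    define hi where "hi i = snd (snd (snd (snd (P (Suc i)))))" for i
    define al where "al i = \<alpha> (Suc i)" for i
    have Pi: "rr i > 0 \<and> C (Suc i) = {x. \<forall>j.
          (if lo i j then - rr i \<le> (x - cc i) \<bullet> uu i j else - rr i < (x - cc i) \<bullet> uu i j) \<and>
          (if hi i j then (x - cc i) \<bullet> uu i j \<le> rr i else (x - cc i) \<bullet> uu i j < rr i)}"
      if "i < M" for i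
      using P[rule_format, of "Suc i"] that unfolding cc_def uu_def rr_def lo_def hi_def by simp
    interpret N: netc d M \<iota> cc uu rr lo hi al
      by unfold_locales (use d_def M1 bij Pi in auto)
    show ?thesis
      unfolding hclass_def
    proof (intro CollectI exI allI)
      fix x
      have "(\<Sum>i=1..M. \<alpha> i * indicator (C i) x) = (\<Sum>i<M. al i * indicator (C (Suc i)) x)"
        unfolding al_def by (simp add: sum.atLeast1_atMost_eq)
      also have "\<dots> = (\<Sum>i<M. al i * (if \<forall>k<2*d. N.cnd i k x then 1 else 0))"
      proof (intro sum.cong refl)
        fix i assume "i \<in> {..<M}"
        then have "x \<in> C (Suc i) \<longleftrightarrow> (\<forall>j. N.locond i j x \<and> N.hicond i j x)"
          using Pi[of i] unfolding N.locond_def N.hicond_def N.tt_def by simp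
        then show "al i * indicator (C (Suc i)) x = al i * (if \<forall>k<2*d. N.cnd i k x then 1 else 0)"
          using N.cube_iff[of i x] by (simp add: indicator_def)
      qed
      also have "\<dots> = net_output ?A N.WW N.BB x" by (rule N.net_final[symmetric])
      finally show "(\<Sum>i=1..M. \<alpha> i * indicator (C i) x) = net_output ?A N.WW N.BB x" .
    qed
  qed
  show ?thesis
  proof (intro exI[of _ ?A] conjI allI impI)
    show "valid_arch ?A" by (rule valid[OF d1 M1])
    show "num_hidden_layers ?A = 2" by (rule hidden[OF d1 M1])
    show "num_weights ?A = 2 * (CARD('n) + 1)^2 * M" by (rule weights[OF d1 M1 d_def])
  next
    fix \<alpha> :: "nat \<Rightarrow> real" and C :: "nat \<Rightarrow> (real^'n) set"
    assume "(\<forall>i\<in>{1..M}. hypercube (C i)) \<and> (\<forall>i\<in>{1..M}. \<forall>j\<in>{1..M}. i \<noteq> j \<longrightarrow> C i \<inter> C j = {})"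
    then show "(\<lambda>x. \<Sum>i=1..M. \<alpha> i * indicator (C i) x) \<in> hclass ?A" using main by blast
  qed
qed


end
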